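(* Let $\mathcal{S}_1$ be the set of integer strings obtainable from $[4]$ by iterating the operations $$[c_1,\dots,c_k]\mapsto[c_1+1,\dots,c_k,2]\quad\text{or}\quad[c_1,\dots,c_k]\mapsto[2,c_1,\dots,c_k+1].$$ Let $\mathcal{S}_2$ be the set of strings obtainable from $[4]=[2+2]$ by iterating the operations $$[a_1,\dots,a_{k-1},a_k+b_l,b_{l-1},\dots,b_1]\mapsto[a_1,\dots,a_{k-1},(a_k+1)+2,b_l,b_{l-1},\dots,b_1]$$ or $$[a_1,\dots,a_{k-1},a_k+b_l,b_{l-1},\dots,b_1]\mapsto[a_1,\dots,a_{k-1},a_k,2+(b_l+1),b_{l-1},\dots,b_1].$$ Then $\mathcal{S}_1=\mathcal{S}_2$, and this set equals the set of Hirzebruch–Jung continued fraction expansions (with all entries $\ge2$) of the rationals $$\left\{\frac{p^2}{pq-1}\,:\,p>q>0,\ \gcd(p,q)=1\right\}.$$ Similarly, the set of Hirzebruch–Jung continued fraction expansions of $$\left\{\frac{p^2}{pq+1}\,:\,p>q>0,\ \gcd(p,q)=1\right\}$$ is obtained from $[2,2,2]$ in either of two ways. The first is by iterating $$[c_1,\dots,c_k]\mapsto[c_1+1,\dots,c_k,2]\quad\text{or}\quad[2,c_1,\dots,c_k+1].$$ The second is by iterating $$[a_1,\dots,a_{k-1},a_k,2,b_l,b_{l-1},\dots,b_1]\mapsto[a_1,\dots,a_{k-1},(a_k+1),2,2,b_l,b_{l-1},\dots,b_1]$$ or $$[a_1,\dots,a_{k-1},a_k,2,b_l,b_{l-1}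,\dots,b_1]\mapsto[a_1,\dots,a_{k-1},a_k,2,2,(b_l+1),b_{l-1},\dots,b_1].$$
   Context: Hirzebruch–Jung continued fractions: $[c_1,\dots,c_n]:=c_1-\cfrac{1}{c_2-\cfrac{1}{\ddots-\cfrac{1}{c_n}}}$, with all $c_i\ge2$ (the expansion of a rational $>1$ is then unique). In the rules for $\mathcal{S}_2$, a string is written as $[a_1,\dots,a_{k-1},a_k+b_l,b_{l-1},\dots,b_1]$. Here $p/q=[a_1,\dots,a_k]$ and $p/(p-q)=[b_1,\dots,b_l]$ for the corresponding coprime pair $p>q$, so that a distinguished middle entry equals $a_k+b_l$. The rules act on this decomposition, keeping track of $a_k$ and $b_l$ separately. The same applies to the decomposition $[a_1,\dots,a_k,2,b_l,\dots,b_1]$ in the second part. *)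

theory Defs
  imports Complex_Main
begin

text \<open>Hirzebruch--Jung continued fraction
  [c1,...,cn] = c1 - 1/(c2 - 1/( ... - 1/cn)), evaluated in the rationals.
  The value of the empty list is irrelevant (only nonempty strings are used).\<close>
fun hj :: "int list \<Rightarrow> rat" where
  "hj [] = 0"
| "hj [c] = of_int c"
| "hj (c # d # cs) = of_int c - 1 / hj (d # cs)"

definition is_hj_expansion :: "int list \<Rightarrow> rat \<Rightarrow> bool" where
  "is_hj_expansion c r \<longleftrightarrow> c \<noteq> [] \<and> (\<forall>x\<in>set c. x \<ge> 2) \<and> hj c = r"

definition incr_last :: "int list \<Rightarrow> int list" where
  "incr_last xs = butlast xs @ [last xs + 1]"

inductive_set gen_strings :: "int list \<Rightarrow> int list set" for s :: "int list" where
  base: "s \<in> gen_strings s"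
| left: "c \<in> gen_strings s \<Longrightarrow> (hd c + 1) # tl c @ [2] \<in> gen_strings s"
| right: "c \<in> gen_strings s \<Longrightarrow> 2 # incr_last c \<in> gen_strings s"

abbreviation S1 :: "int list set" where "S1 \<equiv> gen_strings [4]"
abbreviation T1 :: "int list set" where "T1 \<equiv> gen_strings [2,2,2]"

inductive_set dual_pairs :: "(int list \<times> int list) set" where
  base: "([2], [2]) \<in> dual_pairs"
| stepA: "(a, b) \<in> dual_pairs \<Longrightarrow> (incr_last a, b @ [2]) \<in> dual_pairs"
| stepB: "(a, b) \<in> dual_pairs \<Longrightarrow> (a @ [2], incr_last b) \<in> dual_pairs"

definition glue_mid :: "int list \<Rightarrow> int list \<Rightarrow> int list" where
  "glue_mid a b = butlast a @ [last a + last b] @ rev (butlast b)"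

definition glue_two :: "int list \<Rightarrow> int list \<Rightarrow> int list" where
  "glue_two a b = a @ [2] @ rev b"

definition S2 :: "int list set" where
  "S2 = (\<lambda>(a, b). glue_mid a b) ` dual_pairs"

definition T2 :: "int list set" where
  "T2 = (\<lambda>(a, b). glue_two a b) ` dual_pairs"

definition HJ_minus :: "int list set" where
  "HJ_minus = {c. \<exists>p q :: int. p > q \<and> q > 0 \<and> coprime p q \<and>
      is_hj_expansion c (of_int (p^2) / of_int (p * q - 1))}"

definition HJ_plus :: "int list set" where
  "HJ_plus = {c. \<exists>p q :: int. p > q \<and> q > 0 \<and> coprime p q \<and>
      is_hj_expansion c (of_int (p^2) / of_int (p * q + 1))}"

end

theory Submission
  imports Defs
begin

lemma dual_inv:
  assumes "(a,b) \<in> dual_pairs"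
  shows "a \<noteq> [] \<and> b \<noteq> []"
  using assms by induction (auto simp: incr_last_def)

lemma dual_sym: "(a,b) \<in> dual_pairs \<Longrightarrow> (b,a) \<in> dual_pairs"
  by (induction rule: dual_pairs.induct) (auto intro: dual_pairs.intros)

lemma incr_last_L: "a \<noteq> [] \<Longrightarrow> incr_last ((hd a + 1) # tl a) = (hd (incr_last a) + 1) # tl (incr_last a)"
  by (cases a) (auto simp: incr_last_def)

lemma app2_L: "a \<noteq> [] \<Longrightarrow> ((hd a + 1) # tl a) @ [2] = (hd (a @ [2]) + 1) # tl (a @ [2])"
  by (cases a) auto

lemma incr_last_Cons: "b \<noteq> [] \<Longrightarrow> incr_last (2 # b) = 2 # incr_last b"
  by (cases b) (auto simp: incr_last_def)

lemma dual_L: "(a,b) \<in> dual_pairs \<Longrightarrow> ((hd a + 1) # tl a, 2 # b) \<in> dual_pairs"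
proof (induction rule: dual_pairs.induct)
  case base
  have "(incr_last [2], [2] @ [2]) \<in> dual_pairs" by (rule dual_pairs.stepA[OF dual_pairs.base])
  then show ?case by (simp add: incr_last_def)
next
  case (stepA a b)
  from dual_inv[OF stepA.hyps] have ne: "a \<noteq> []" "b \<noteq> []" by auto
  from dual_pairs.stepA[OF stepA.IH] show ?case using ne by (simp add: incr_last_L)
next
  case (stepB a b)
  from dual_inv[OF stepB.hyps] have ne: "a \<noteq> []" "b \<noteq> []" by auto
  from dual_pairs.stepB[OF stepB.IH] show ?case using ne by (simp add: app2_L incr_last_Cons)
qed

lemma dual_R: "(a,b) \<in> dual_pairs \<Longrightarrow> (2 # a, (hd b + 1) # tl b) \<in> dual_pairs"
  using dual_sym dual_L by blast

inductive_set dp2 :: "(int list \<times> int list) set" where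
  base: "([2],[2]) \<in> dp2"
| L: "(a,b) \<in> dp2 \<Longrightarrow> ((hd a + 1) # tl a, 2 # b) \<in> dp2"
| R: "(a,b) \<in> dp2 \<Longrightarrow> (2 # a, (hd b + 1) # tl b) \<in> dp2"

lemma dp2_dual: "(a,b) \<in> dp2 \<Longrightarrow> (a,b) \<in> dual_pairs"
  by (induction rule: dp2.induct) (auto intro: dual_pairs.base dual_L dual_R)

lemma dp2_ne: "(a,b) \<in> dp2 \<Longrightarrow> a \<noteq> [] \<and> b \<noteq> []"
  using dp2_dual dual_inv by blast

lemma dp2_AB: "(a,b) \<in> dp2 \<Longrightarrow> (incr_last a, b @ [2]) \<in> dp2 \<and> (a @ [2], incr_last b) \<in> dp2"
proof (induction rule: dp2.induct)
  case base
  have 1: "(incr_last [2], [2] @ [2]) = ((hd [2::int] + 1) # tl [2], 2 # [2::int])" by (simp add: incr_last_def)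
  have 2: "([2] @ [2], incr_last [2]) = (2 # [2::int], (hd [2::int] + 1) # tl [2])" by (simp add: incr_last_def)
  have "((hd [2::int] + 1) # tl [2], 2 # [2::int]) \<in> dp2" by (rule dp2.L[OF dp2.base])
  moreover have "(2 # [2::int], (hd [2::int] + 1) # tl [2]) \<in> dp2" by (rule dp2.R[OF dp2.base])
  ultimately show ?case unfolding 1 2 by blast
next
  case (L a b)
  from dp2_ne[OF L.hyps] have ne: "a \<noteq> []" "b \<noteq> []" by auto
  have e1: "(incr_last ((hd a + 1) # tl a), (2 # b) @ [2]) = ((hd (incr_last a) + 1) # tl (incr_last a), 2 # (b @ [2]))"
    using ne by (simp add: incr_last_L)
  have e2: "(((hd a + 1) # tl a) @ [2], incr_last (2 # b)) = ((hd (a @ [2]) + 1) # tl (a @ [2]), 2 # incr_last b)"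
    using ne by (simp add: app2_L incr_last_Cons)
  show ?case unfolding e1 e2 using L.IH by (auto intro: dp2.L)
next
  case (R a b)
  from dp2_ne[OF R.hyps] have ne: "a \<noteq> []" "b \<noteq> []" by auto
  have e1: "(incr_last (2 # a), ((hd b + 1) # tl b) @ [2]) = (2 # incr_last a, (hd (b @ [2]) + 1) # tl (b @ [2]))"
    using ne by (simp add: app2_L incr_last_Cons)
  have e2: "((2 # a) @ [2], incr_last ((hd b + 1) # tl b)) = (2 # (a @ [2]), (hd (incr_last b) + 1) # tl (incr_last b))"
    using ne by (simp add: incr_last_L)
  show ?case unfolding e1 e2 using R.IH by (auto intro: dp2.R)
qed

lemma dual_dp2: "(a,b) \<in> dual_pairs \<Longrightarrow> (a,b) \<in> dp2"
  by (induction rule: dual_pairs.induct) (auto intro: dp2.base dest: dp2_AB)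

lemma dp2_eq: "dp2 = dual_pairs"
  using dp2_dual dual_dp2 by fast

lemma glue_mid_L: "a \<noteq> [] \<Longrightarrow> b \<noteq> [] \<Longrightarrow>
  glue_mid ((hd a + 1) # tl a) (2 # b) = (hd (glue_mid a b) + 1) # tl (glue_mid a b) @ [2]"
  by (cases a rule: list.exhaust; cases "tl a") (auto simp: glue_mid_def)

lemma glue_mid_R: "a \<noteq> [] \<Longrightarrow> b \<noteq> [] \<Longrightarrow>
  glue_mid (2 # a) ((hd b + 1) # tl b) = 2 # incr_last (glue_mid a b)"
  by (cases b rule: list.exhaust; cases "tl b") (auto simp: glue_mid_def incr_last_def butlast_append)

lemma glue_two_L: "a \<noteq> [] \<Longrightarrow> 
  glue_two ((hd a + 1) # tl a) (2 # b) = (hd (glue_two a b) + 1) # tl (glue_two a b) @ [2]"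
  by (cases a) (auto simp: glue_two_def)

lemma glue_two_R: "b \<noteq> [] \<Longrightarrow>
  glue_two (2 # a) ((hd b + 1) # tl b) = 2 # incr_last (glue_two a b)"
  by (cases b) (auto simp: glue_two_def incr_last_def butlast_append)


lemma dp2_S1: "(a,b) \<in> dp2 \<Longrightarrow> glue_mid a b \<in> S1 \<and> glue_two a b \<in> T1"
proof (induction rule: dp2.induct)
  case base
  have "glue_mid [2] [2] = [4]" "glue_two [2] [2] = [2,2,2]" by (simp_all add: glue_mid_def glue_two_def)
  then show ?case by (simp add: gen_strings.base)
next
  case (L a b)
  from dp2_ne[OF L.hyps] have ne: "a \<noteq> []" "b \<noteq> []" by auto
  show ?case using L.IH ne by (simp add: glue_mid_L glue_two_L gen_strings.left)
next
  case (R a b)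
  from dp2_ne[OF R.hyps] have ne: "a \<noteq> []" "b \<noteq> []" by auto
  show ?case using R.IH ne by (simp add: glue_mid_R glue_two_R gen_strings.right)
qed

lemma S1_dp2: "c \<in> S1 \<Longrightarrow> \<exists>a b. (a,b) \<in> dp2 \<and> c = glue_mid a b"
proof (induction rule: gen_strings.induct)
  case base
  have "glue_mid [2] [2] = [4]" by (simp add: glue_mid_def)
  then show ?case using dp2.base by metis
next
  case (left c)
  then obtain a b where ab: "(a,b) \<in> dp2" "c = glue_mid a b" by blast
  from dp2_ne[OF ab(1)] have ne: "a \<noteq> []" "b \<noteq> []" by auto
  show ?case using dp2.L[OF ab(1)] ab(2) ne glue_mid_L by metis
next
  case (right c)
  then obtain a b where ab: "(a,b) \<in> dp2" "c = glue_mid a b" by blast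
  from dp2_ne[OF ab(1)] have ne: "a \<noteq> []" "b \<noteq> []" by auto
  show ?case using dp2.R[OF ab(1)] ab(2) ne glue_mid_R by metis
qed

lemma T1_dp2: "c \<in> T1 \<Longrightarrow> \<exists>a b. (a,b) \<in> dp2 \<and> c = glue_two a b"
proof (induction rule: gen_strings.induct)
  case base
  have "glue_two [2] [2] = [2,2,2]" by (simp add: glue_two_def)
  then show ?case using dp2.base by metis
next
  case (left c)
  then obtain a b where ab: "(a,b) \<in> dp2" "c = glue_two a b" by blast
  from dp2_ne[OF ab(1)] have ne: "a \<noteq> []" "b \<noteq> []" by auto
  show ?case using dp2.L[OF ab(1)] ab(2) ne glue_two_L by metis
next
  case (right c)
  then obtain a b where ab: "(a,b) \<in> dp2" "c = glue_two a b" by blast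
  from dp2_ne[OF ab(1)] have ne: "a \<noteq> []" "b \<noteq> []" by auto
  show ?case using dp2.R[OF ab(1)] ab(2) ne glue_two_R by metis
qed

lemma S1_S2: "S1 = S2"
  unfolding S2_def dp2_eq[symmetric]
  using S1_dp2 dp2_S1 by fastforce

lemma T1_T2: "T1 = T2"
  unfolding T2_def dp2_eq[symmetric]
  using T1_dp2 dp2_S1 by fastforce


datatype m2 = M2 (e11: int) (e12: int) (e21: int) (e22: int)

fun mmul :: "m2 \<Rightarrow> m2 \<Rightarrow> m2" where
  "mmul (M2 a b c d) (M2 e f g h) = M2 (a*e+b*g) (a*f+b*h) (c*e+d*g) (c*f+d*h)"

definition Mx :: "int \<Rightarrow> m2" where "Mx x = M2 x (-1) 1 0"
definition I2 :: m2 where "I2 = M2 1 0 0 1"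

fun mat_of :: "int list \<Rightarrow> m2" where
  "mat_of [] = I2"
| "mat_of (x # xs) = mmul (Mx x) (mat_of xs)"

fun flipm :: "m2 \<Rightarrow> m2" where "flipm (M2 a b c d) = M2 a (-c) (-b) d"
fun detm :: "m2 \<Rightarrow> int" where "detm (M2 a b c d) = a*d - b*c"
fun dualm :: "m2 \<Rightarrow> m2" where "dualm (M2 a b c d) = M2 a (-(a+b)) (a-c) (-(a-c+b-d))"
fun negm :: "m2 \<Rightarrow> m2" where "negm (M2 a b c d) = M2 (-a) (-b) (-c) (-d)"

lemma mmul_assoc: "mmul (mmul A B) C = mmul A (mmul B C)"
  by (cases A; cases B; cases C) (simp add: algebra_simps)

lemma mmul_I2: "mmul I2 B = B" "mmul B I2 = B"
  by (cases B; simp add: I2_def)+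

lemma mat_of_append: "mat_of (xs @ ys) = mmul (mat_of xs) (mat_of ys)"
  by (induction xs) (simp_all add: mmul_I2 mmul_assoc)

lemma mat_of_single: "mat_of [x] = Mx x"
  by (simp add: mmul_I2)

lemma mat_of_rev: "mat_of (rev c) = flipm (mat_of c)"
proof (induction c)
  case Nil
  then show ?case by (simp add: I2_def)
next
  case (Cons x c)
  then show ?case by (cases "mat_of c") (simp add: mat_of_append mmul_I2 Mx_def I2_def algebra_simps)
qed

lemma det_mat_of: "detm (mat_of c) = 1"
proof (induction c)
  case Nil
  then show ?case by (simp add: I2_def)
next
  case (Cons x c)
  then show ?case by (cases "mat_of c") (simp add: Mx_def I2_def algebra_simps)
qed

lemma mat_incr_last: "a \<noteq> [] \<Longrightarrow> mat_of (incr_last a) = mmul (mat_of a) (M2 1 0 (-1) 1)"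
proof -
  assume "a \<noteq> []"
  then have a: "a = butlast a @ [last a]" by simp
  have "mat_of a = mmul (mat_of (butlast a)) (Mx (last a))"
    by (subst a) (simp add: mat_of_append mmul_I2)
  then show ?thesis
    by (cases "mat_of (butlast a)") (simp add: incr_last_def mat_of_append mat_of_single Mx_def I2_def algebra_simps)
qed

lemma dual_inv2:
  assumes "(a,b) \<in> dual_pairs"
  shows "(\<forall>x\<in>set a. x \<ge> 2) \<and> (\<forall>x\<in>set b. x \<ge> 2) \<and> mat_of b = dualm (mat_of a)"
  using assms
proof (induction rule: dual_pairs.induct)
  case base
  then show ?case by (simp add: Mx_def I2_def)
next
  case (stepA a b)
  from dual_inv[OF stepA.hyps] have ne: "a \<noteq> []" "b \<noteq> []" by auto
  have s: "\<forall>x\<in>set (incr_last a). x \<ge> 2"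
    using stepA.IH ne by (auto simp: incr_last_def dest: in_set_butlastD) (meson last_in_set dual_order.trans one_le_numeral)
  show ?case using stepA.IH ne s
    by (cases "mat_of a") (simp add: mat_incr_last mat_of_append mat_of_single Mx_def I2_def algebra_simps)
next
  case (stepB a b)
  from dual_inv[OF stepB.hyps] have ne: "a \<noteq> []" "b \<noteq> []" by auto
  have s: "\<forall>x\<in>set (incr_last b). x \<ge> 2"
    using stepB.IH ne by (auto simp: incr_last_def dest: in_set_butlastD) (meson last_in_set dual_order.trans one_le_numeral)
  show ?case using stepB.IH ne s
    by (cases "mat_of a") (simp add: mat_incr_last mat_of_append mat_of_single Mx_def I2_def algebra_simps)
qed

lemma glue_mid_mat:
  assumes "a \<noteq> []" "b \<noteq> []"
  shows "mat_of (glue_mid a b) = negm (mmul (mmul (mat_of a) (M2 0 (-1) 1 0)) (flipm (mat_of b)))"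
proof -
  have a: "a = butlast a @ [last a]" using assms by simp
  have b: "rev b = last b # rev (butlast b)" using assms
    by (metis append_butlast_last_id rev.simps(2) rev_rev_ident)
  have ma: "mat_of a = mmul (mat_of (butlast a)) (Mx (last a))"
    by (subst a) (simp add: mat_of_append mmul_I2)
  have mb: "flipm (mat_of b) = mmul (Mx (last b)) (mat_of (rev (butlast b)))"
    by (metis b mat_of.simps(2) mat_of_rev)
  show ?thesis unfolding glue_mid_def mat_of_append ma mb
    by (cases "mat_of (butlast a)"; cases "mat_of (rev (butlast b))") (simp add: mat_of_single Mx_def I2_def algebra_simps)
qed

lemma glue_two_mat:
  shows "mat_of (glue_two a b) = mmul (mmul (mat_of a) (Mx 2)) (flipm (mat_of b))"
  unfolding glue_two_def by (simp add: mat_of_append mat_of_rev mat_of_single mmul_assoc)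

lemma glue_mid_vals:
  assumes "(a,b) \<in> dual_pairs"
  shows "e11 (mat_of (glue_mid a b)) = e11 (mat_of a) ^ 2 \<and>
         e21 (mat_of (glue_mid a b)) = e11 (mat_of a) * e21 (mat_of a) - 1 \<and>
         e11 (mat_of (glue_two a b)) = e11 (mat_of a) ^ 2 \<and>
         e21 (mat_of (glue_two a b)) = e11 (mat_of a) * e21 (mat_of a) + 1"
proof -
  from dual_inv[OF assms] have ne: "a \<noteq> []" "b \<noteq> []" by auto
  from dual_inv2[OF assms] have mb: "mat_of b = dualm (mat_of a)" by auto
  have d: "detm (mat_of a) = 1" by (rule det_mat_of)
  show ?thesis unfolding glue_mid_mat[OF ne] glue_two_mat mb using d
    by (cases "mat_of a") (simp add: Mx_def I2_def algebra_simps power2_eq_square)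
qed


lemma hj_mat:
  assumes "\<forall>x\<in>set c. x \<ge> 2"
  shows "e11 (mat_of c) > e21 (mat_of c) \<and> e21 (mat_of c) \<ge> 0 \<and>
    (c \<noteq> [] \<longrightarrow> e21 (mat_of c) > 0 \<and> hj c = of_int (e11 (mat_of c)) / of_int (e21 (mat_of c)))"
  using assms
proof (induction c)
  case Nil
  then show ?case by (simp add: I2_def)
next
  case (Cons x cs)
  obtain p r q s where m: "mat_of cs = M2 p r q s" by (cases "mat_of cs")
  from Cons have IH: "p > q" "q \<ge> 0" "cs \<noteq> [] \<longrightarrow> q > 0 \<and> hj cs = of_int p / of_int q"
    using m by auto
  have x: "x \<ge> 2" using Cons.prems by auto
  have p0: "p > 0" using IH by linarith
  have "x * p - q > p" using x IH p0
    proof -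
    have "2 * p \<le> x * p" using x p0 by (simp add: mult_right_mono)
    then show ?thesis using IH by linarith
  qed
  moreover have "hj (x # cs) = of_int (x * p - q) / of_int p"
  proof (cases cs)
    case Nil
    then show ?thesis using m by (simp add: I2_def)
  next
    case (Cons y ys)
    then have "hj (x # cs) = of_int x - 1 / hj cs" by simp
    also have "\<dots> = of_int x - of_int q / of_int p" using IH Cons by simp
    also have "\<dots> = of_int (x * p - q) / of_int p" using p0 by (simp add: field_simps)
    finally show ?thesis .
  qed
  ultimately show ?case using m p0 by (simp add: Mx_def)
qed

lemma hj_gt1:
  assumes "c \<noteq> []" "\<forall>x\<in>set c. x \<ge> 2"
  shows "hj c > 1"
proof -
  from hj_mat[OF assms(2)] assms(1) have h: "e11 (mat_of c) > e21 (mat_of c)" "e21 (mat_of c) > 0"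
    "hj c = of_int (e11 (mat_of c)) / of_int (e21 (mat_of c))" by auto
  then show ?thesis by (simp add: of_int_less_iff)
qed

lemma hj_bounds:
  assumes "cs \<noteq> []" "\<forall>x\<in>set cs. x \<ge> 2"
  shows "of_int x - 1 < hj (x # cs) \<and> hj (x # cs) < of_int x"
proof -
  have h: "hj cs > 1" by (rule hj_gt1[OF assms])
  obtain y ys where "cs = y # ys" using assms(1) by (cases cs) auto
  then have e: "hj (x # cs) = of_int x - 1 / hj cs" by simp
  have "0 < 1 / hj cs" "1 / hj cs < 1" using h by auto
  then show ?thesis unfolding e by linarith
qed

lemma hj_unique:
  assumes "c \<noteq> []" "\<forall>x\<in>set c. x \<ge> 2" "d \<noteq> []" "\<forall>x\<in>set d. x \<ge> 2" "hj c = hj d"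
  shows "c = d"
  using assms
proof (induction c arbitrary: d)
  case Nil
  then show ?case by simp
next
  case (Cons x cs)
  obtain y ds where d: "d = y # ds" using Cons.prems by (cases d) auto
  show ?case
  proof (cases "cs = []")
    case True
    show ?thesis
    proof (cases "ds = []")
      case True
      then show ?thesis using \<open>cs = []\<close> Cons.prems d by simp
    next
      case False
      have "of_int y - 1 < hj d \<and> hj d < (of_int y :: rat)" using hj_bounds[where x=y, OF False] Cons.prems(4) d by simp
      then have "of_int (y - 1) < (of_int x :: rat) \<and> (of_int x :: rat) < of_int y"
        using Cons.prems \<open>cs = []\<close> by simp
      then have "y - 1 < x \<and> x < y" by (simp only: of_int_less_iff)
      then have False by linarith
      then show ?thesis ..
    qed
  next
    case False
    have bx: "of_int x - 1 < hj (x # cs) \<and> hj (x # cs) < (of_int x :: rat)"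
      using hj_bounds[where x=x, OF False] Cons.prems(2) by simp
    show ?thesis
    proof (cases "ds = []")
      case True
      then have "of_int (x - 1) < (of_int y :: rat) \<and> (of_int y :: rat) < of_int x"
        using bx Cons.prems d by simp
      then have "x - 1 < y \<and> y < x" by (simp only: of_int_less_iff)
      then have False by linarith
      then show ?thesis ..
    next
      case ds: False
      have by': "of_int y - 1 < hj d \<and> hj d < (of_int y :: rat)" using hj_bounds[where x=y, OF ds] Cons.prems(4) d by simp
      have "of_int (x - 1) < (of_int y :: rat) \<and> of_int (y - 1) < (of_int x :: rat)"
        using bx by' Cons.prems(5) by simp
      then have "x - 1 < y \<and> y - 1 < x" by (simp only: of_int_less_iff)
      then have xy: "x = y" by simp
      obtain z zs where "cs = z # zs" using False by (cases cs) auto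
      moreover obtain w ws where "ds = w # ws" using ds by (cases ds) auto
      ultimately have "of_int x - 1 / hj cs = of_int y - 1 / hj ds" using Cons.prems(5) d by simp
      then have "hj cs = hj ds" using xy by simp
      then have "cs = ds" using Cons.IH[of ds] False ds Cons.prems d by auto
      then show ?thesis using xy d by simp
    qed
  qed
qed

lemma exists_dual:
  "a \<noteq> [] \<Longrightarrow> \<forall>x\<in>set a. x \<ge> 2 \<Longrightarrow> \<exists>b. (a,b) \<in> dual_pairs"
proof (induction "nat (sum_list a)" arbitrary: a rule: less_induct)
  case less
  show ?case
  proof (cases "a = [2]")
    case True
    then show ?thesis using dual_pairs.base by blast
  next
    case False
    have sl: "sum_list a = sum_list (butlast a) + last a"
      using less.prems(1) by (metis append_butlast_last_id sum_list_append sum_list.Cons sum_list.Nil add_0_right)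
    have pos: "\<forall>x\<in>set (butlast a). x \<ge> 2" using less.prems(2) by (auto dest: in_set_butlastD)
    have sb: "sum_list (butlast a) \<ge> 0" by (intro sum_list_nonneg) (use pos in force)
    have la: "last a \<ge> 2" using less.prems by auto
    show ?thesis
    proof (cases "last a \<ge> 3")
      case True
      define a0 where "a0 = butlast a @ [last a - 1]"
      have ne: "a0 \<noteq> []" by (simp add: a0_def)
      have p0: "\<forall>x\<in>set a0. x \<ge> 2" using pos True by (auto simp: a0_def)
      have "nat (sum_list a0) < nat (sum_list a)" using sl sb la by (simp add: a0_def)
      then obtain b0 where "(a0, b0) \<in> dual_pairs" using less.hyps ne p0 by blast
      from dual_pairs.stepA[OF this] have "(incr_last a0, b0 @ [2]) \<in> dual_pairs" .
      moreover have "incr_last a0 = a" using less.prems(1) by (simp add: a0_def incr_last_def)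
      ultimately show ?thesis by blast
    next
      case False
      then have l2: "last a = 2" using la by simp
      have nb: "butlast a \<noteq> []" using \<open>a \<noteq> [2]\<close> less.prems(1) l2
        by (metis append_butlast_last_id append_Nil)
      have "nat (sum_list (butlast a)) < nat (sum_list a)" using sl sb la by simp
      then obtain b0 where "(butlast a, b0) \<in> dual_pairs" using less.hyps nb pos by blast
      from dual_pairs.stepB[OF this] have "(butlast a @ [2], incr_last b0) \<in> dual_pairs" .
      moreover have "butlast a @ [2] = a" using less.prems(1) l2 by (metis append_butlast_last_id)
      ultimately show ?thesis by metis
    qed
  qed
qed

lemma exists_hj:
  "0 < q \<Longrightarrow> q < p \<Longrightarrow> coprime p q \<Longrightarrow>
   \<exists>a. a \<noteq> [] \<and> (\<forall>x\<in>set a. x \<ge> 2) \<and> e11 (mat_of a) = p \<and> e21 (mat_of a) = (q::int)"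
proof (induction "nat p" arbitrary: p q rule: less_induct)
  case less
  show ?case
  proof (cases "q = 1")
    case True
    then show ?thesis using less.prems by (intro exI[of _ "[p]"]) (simp add: Mx_def I2_def)
  next
    case False
    have nd: "p mod q \<noteq> 0"
    proof
      assume "p mod q = 0"
      then have "q dvd p" by auto
      then have "is_unit q" using less.prems(3) by (meson coprime_common_divisor dvd_refl)
      then show False using False less.prems(1) by simp
    qed
    define x where "x = p div q + 1"
    define r where "r = x * q - p"
    have pm: "p = q * (p div q) + p mod q" by simp
    have r: "r = q - p mod q" unfolding r_def x_def using pm by (simp add: algebra_simps)
    have mr: "0 \<le> p mod q" "p mod q < q" using less.prems(1) by auto
    have r0: "0 < r" "r < q" using r mr nd by auto
    have "p div q \<ge> 1" using less.prems(1,2) using pos_imp_zdiv_pos_iff[of q p] by linarith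
    then have x2: "x \<ge> 2" by (simp add: x_def)
    have cop: "coprime q r"
    proof (rule coprimeI)
      fix c assume "c dvd q" "c dvd r"
      then have "c dvd x * q - r" by simp
      then have "c dvd p" by (simp add: r_def)
      then show "is_unit c" using \<open>c dvd q\<close> less.prems(3) by (meson coprime_common_divisor)
    qed
    have "nat q < nat p" using less.prems by simp
    then obtain cs where cs: "cs \<noteq> []" "\<forall>x\<in>set cs. x \<ge> 2" "e11 (mat_of cs) = q" "e21 (mat_of cs) = r"
      using less.hyps[of q r] r0 cop by blast
    show ?thesis
    proof (intro exI[of _ "x # cs"] conjI)
      show "e11 (mat_of (x # cs)) = p" using cs
        by (cases "mat_of cs") (simp add: Mx_def r_def)
      show "e21 (mat_of (x # cs)) = q" using cs by (cases "mat_of cs") (simp add: Mx_def)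
    qed (use cs x2 in auto)
  qed
qed


lemma glue_hj:
  assumes "(a,b) \<in> dual_pairs"
  defines "p \<equiv> e11 (mat_of a)" and "q \<equiv> e21 (mat_of a)"
  shows "p > q \<and> q > 0 \<and> coprime p q \<and>
    is_hj_expansion (glue_mid a b) (of_int (p^2) / of_int (p * q - 1)) \<and>
    is_hj_expansion (glue_two a b) (of_int (p^2) / of_int (p * q + 1))"
proof -
  from dual_inv[OF assms(1)] have ne: "a \<noteq> []" "b \<noteq> []" by auto
  from dual_inv2[OF assms(1)] have pa: "\<forall>x\<in>set a. x \<ge> 2" and pb: "\<forall>x\<in>set b. x \<ge> 2" by auto
  from hj_mat[OF pa] ne have pq: "p > q" "q > 0" unfolding p_def q_def by auto
  have det: "p * e22 (mat_of a) - e12 (mat_of a) * q = 1"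
    using det_mat_of[of a] unfolding p_def q_def by (cases "mat_of a") simp
  have cop: "coprime p q"
  proof (rule coprimeI)
    fix c assume "c dvd p" "c dvd q"
    then have "c dvd p * e22 (mat_of a) - e12 (mat_of a) * q" by simp
    then show "is_unit c" using det by simp
  qed
  have la: "last a \<ge> 2" "last b \<ge> 2" using ne pa pb by auto
  have gm: "\<forall>x\<in>set (glue_mid a b). x \<ge> 2"
    using pa pb la by (auto simp: glue_mid_def dest: in_set_butlastD)
  have gt: "\<forall>x\<in>set (glue_two a b). x \<ge> 2"
    using pa pb by (auto simp: glue_two_def)
  have v: "e11 (mat_of (glue_mid a b)) = p ^ 2" "e21 (mat_of (glue_mid a b)) = p * q - 1"
       "e11 (mat_of (glue_two a b)) = p ^ 2" "e21 (mat_of (glue_two a b)) = p * q + 1"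
    using glue_mid_vals[OF assms(1)] unfolding p_def q_def by auto
  have nm: "glue_mid a b \<noteq> []" by (simp add: glue_mid_def)
  have nt: "glue_two a b \<noteq> []" by (simp add: glue_two_def)
  have h1: "hj (glue_mid a b) = of_int (p^2) / of_int (p * q - 1)"
    using hj_mat[OF gm] nm v by simp
  have h2: "hj (glue_two a b) = of_int (p^2) / of_int (p * q + 1)"
    using hj_mat[OF gt] nt v by simp
  show ?thesis using pq cop h1 h2 gm gt nm nt by (simp add: is_hj_expansion_def)
qed

lemma S2_HJ: "S2 = HJ_minus"
proof
  show "S2 \<subseteq> HJ_minus"
    unfolding S2_def HJ_minus_def using glue_hj by fastforce
next
  show "HJ_minus \<subseteq> S2"
  proof
    fix c assume "c \<in> HJ_minus"
    then obtain p q :: int where pq: "p > q" "q > 0" "coprime p q"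
      and c: "is_hj_expansion c (of_int (p^2) / of_int (p * q - 1))"
      unfolding HJ_minus_def by blast
    obtain a where a: "a \<noteq> []" "\<forall>x\<in>set a. x \<ge> 2" "e11 (mat_of a) = p" "e21 (mat_of a) = q"
      using exists_hj[OF pq(2,1,3)] by blast
    obtain b where ab: "(a,b) \<in> dual_pairs" using exists_dual[OF a(1,2)] by blast
    have g: "is_hj_expansion (glue_mid a b) (of_int (p^2) / of_int (p * q - 1))"
      using glue_hj[OF ab] a by simp
    have "c = glue_mid a b" using c g hj_unique unfolding is_hj_expansion_def by metis
    then show "c \<in> S2" unfolding S2_def using ab by force
  qed
qed

lemma T2_HJ: "T2 = HJ_plus"
proof
  show "T2 \<subseteq> HJ_plus"
    unfolding T2_def HJ_plus_def using glue_hj by fastforce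
next
  show "HJ_plus \<subseteq> T2"
  proof
    fix c assume "c \<in> HJ_plus"
    then obtain p q :: int where pq: "p > q" "q > 0" "coprime p q"
      and c: "is_hj_expansion c (of_int (p^2) / of_int (p * q + 1))"
      unfolding HJ_plus_def by blast
    obtain a where a: "a \<noteq> []" "\<forall>x\<in>set a. x \<ge> 2" "e11 (mat_of a) = p" "e21 (mat_of a) = q"
      using exists_hj[OF pq(2,1,3)] by blast
    obtain b where ab: "(a,b) \<in> dual_pairs" using exists_dual[OF a(1,2)] by blast
    have g: "is_hj_expansion (glue_two a b) (of_int (p^2) / of_int (p * q + 1))"
      using glue_hj[OF ab] a by simp
    have "c = glue_two a b" using c g hj_unique unfolding is_hj_expansion_def by metis
    then show "c \<in> T2" unfolding T2_def using ab by force
  qed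
qed

theorem lemma3p3:
  shows "S1 = S2 \<and> S2 = HJ_minus \<and> T1 = T2 \<and> T1 = HJ_plus"
  using S1_S2 S2_HJ T1_T2 T2_HJ by simp

end
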